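(* Assume the reduced model family $(V_k)_{k=1,\dots,K}$ is $(\varepsilon,\mu)$-admissible for some $\varepsilon>0$ and $\mu\ge1$. Let $u\in V$ satisfy $\operatorname{dist}(u,\mathcal M)\le\varepsilon_{model}$. Let the observation be $w=P_Wu+\eta$ with $\eta\in W$ and $\|\eta\|\le\varepsilon_{noise}$. Then the estimator obtained by surrogate model selection satisfies $$\|u-u^*(w)\|\le\delta_{\kappa\rho}+\varepsilon_{noise},\qquad \rho:=\mu(\varepsilon+\varepsilon_{noise})+(\mu+1)\varepsilon_{model},\quad\kappa=R/r.$$ For the idealized selection (minimizing $\operatorname{dist}(u_k^*(w),\mathcal M)$), the same bound holds with $\kappa=1$.
   Context: Let $V$ be a real Hilbert space with norm $\|\cdot\|$. Let $Y\subset\mathbb R^d$ be compact and let $y\mapsto u(y)$ be a continuous map from $Y$ to $V$. Set $\mathcal M=\{u(y):y\in Y\}$, which is compact. Let $W\subset V$ be a linear subspace of finite dimension $m$, let $P_W$ be the orthogonal projection onto $W$, and let $W^\perp$ be its orthogonal complement. For $w\in W$ put $V_w=w+W^\perp$. For $\sigma\ge 0$ define - $\mathcal M_\sigma=\{v\in V:\operatorname{dist}(v,\mathcal M)\le\sigma\}$; - $\delta_\sigma=\sup\{\|u-v\|: u,v\in\mathcal M_\sigma,\ u-v\in W^\perp\}$. For a finite-dimensional subspace $E\subset V$ let $\mu(E,W)=\sup_{v\in E\setminus\{0\}}\|v\|/\|P_Wv\|$, with the conventions $\mu(\{0\},W)=1$ and $\mu(E,W)=+\infty$ if $E\cap W^\perp\ne\{0\}$.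 A reduced model family consists of: - sets $\mathcal M_1,\dots,\mathcal M_K$ with $\mathcal M=\bigcup_{k=1}^K\mathcal M_k$; - affine spaces $V_k=\bar u_k+\bar V_k$, where $\bar u_k\in V$ and $\bar V_k$ is a linear subspace of dimension $n_k\le m$; - numbers $\varepsilon_k\ge\sup_{u\in\mathcal M_k}\operatorname{dist}(u,V_k)$; - constants $\mu_k=\mu(\bar V_k,W)<\infty$. The family is $(\varepsilon,\mu)$-admissible if $\varepsilon_k\le\varepsilon$ and $\mu_k\le\mu$ for all $k$. For $w\in W$ the PBDW estimators are $u_k^*(w)=\operatorname{argmin}\{\operatorname{dist}(v,V_k): v\in V_w\}$, $k=1,\dots,K$ (the minimizer is unique). A surrogate is a function $\mathcal S(\cdot,\mathcal M):V\to[0,\infty)$ with $r\operatorname{dist}(v,\mathcal M)\le\mathcal S(v,\mathcal M)\le R\operatorname{dist}(v,\mathcal M)$ for all $v\in V$, where $0<r\le R$ are constants; set $\kappa=R/r$. Surrogate model selection picks $k^*(w)$ as any minimizer of $k\mapsto\mathcal S(u_k^*(w),\mathcal M)$ over $\{1,\dots,K\}$ and sets $u^*(w)=u^*_{k^*(w)}(w)$. *)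

theory Defs
  imports "HOL-Analysis.Analysis"
begin

definition fin_dim_subspace :: "'v::real_vector set \<Rightarrow> bool" where
  "fin_dim_subspace E \<longleftrightarrow> subspace E \<and> (\<exists>B. finite B \<and> span B = E)"

definition orth_proj :: "'v::real_inner set \<Rightarrow> 'v \<Rightarrow> 'v" where
  "orth_proj W v = (THE p. p \<in> W \<and> (\<forall>x\<in>W. inner (v - p) x = 0))"

definition affine_fiber :: "'v::real_inner set \<Rightarrow> 'v \<Rightarrow> 'v set" where
  "affine_fiber W w = (\<lambda>z. w + z) ` (orthogonal_comp W)"

definition fattening :: "'v::real_normed_vector set \<Rightarrow> real \<Rightarrow> 'v set" where
  "fattening M \<sigma> = {v. infdist v M \<le> \<sigma>}"

definition delta :: "'v::real_inner set \<Rightarrow> 'v set \<Rightarrow> real \<Rightarrow> real" where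
  "delta M W \<sigma> = Sup {norm (u - v) | u v. u \<in> fattening M \<sigma> \<and> v \<in> fattening M \<sigma>
                         \<and> u - v \<in> orthogonal_comp W}"

definition mu_const :: "'v::real_inner set \<Rightarrow> 'v set \<Rightarrow> ereal" where
  "mu_const E W =
     (if E \<inter> orthogonal_comp W \<noteq> {0} then \<infinity>
      else if E = {0} then 1
      else Sup {ereal (norm v / norm (orth_proj W v)) | v. v \<in> E \<and> v \<noteq> 0})"

definition pbdw :: "'v::real_inner set \<Rightarrow> 'v set \<Rightarrow> 'v \<Rightarrow> 'v" where
  "pbdw W Vk w = (THE v. v \<in> affine_fiber W w \<and>
                     (\<forall>v'\<in>affine_fiber W w. infdist v Vk \<le> infdist v' Vk))"

end

theory Submission
  imports Defs
begin



lemma proj_exists: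
  fixes E :: "'v::real_inner set"
  assumes "fin_dim_subspace E"
  shows "\<exists>p\<in>E. \<forall>x\<in>E. inner (v - p) x = 0"
proof -
  obtain B where B: "finite B" "span B = E" using assms unfolding fin_dim_subspace_def by blast
  obtain C where C: "finite C" "span C = span B" "pairwise orthogonal C"
    using basis_orthogonal[OF B(1)] by blast
  let ?a = "\<Sum>b\<in>C. (b \<bullet> v / (b \<bullet> b)) *\<^sub>R b"
  have o: "orthogonal (v - ?a) x" if "x \<in> C" for x
  proof -
    have "v \<bullet> x = (\<Sum>y\<in>C. if y = x then y \<bullet> v else 0)"
      by (simp add: \<open>finite C\<close> inner_commute that)
    also have "\<dots> =  (\<Sum>b\<in>C. b \<bullet> v * (b \<bullet> x) / (b \<bullet> b))"
      apply (rule sum.cong [OF refl], simp)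
      by (meson C(3) orthogonal_def pairwise_def that)
    finally show ?thesis
      by (simp add: orthogonal_def algebra_simps inner_sum_left)
  qed
  have "?a \<in> span C" by (intro span_sum span_scale span_base)
  moreover have "\<forall>x\<in>E. inner (v - ?a) x = 0"
  proof
    fix x assume "x \<in> E"
    hence "x \<in> span C" using C B by simp
    thus "inner (v - ?a) x = 0" using orthogonal_to_span[of x C "v - ?a"] o
      unfolding orthogonal_def by blast
  qed
  ultimately show ?thesis using C B by auto
qed

lemma proj_unique:
  fixes E :: "'v::real_inner set"
  assumes "subspace E" "p \<in> E" "\<forall>x\<in>E. inner (v - p) x = 0"
    "q \<in> E" "\<forall>x\<in>E. inner (v - q) x = 0"
  shows "p = q"
proof -
  have "p - q \<in> E" using assms by (simp add: subspace_diff)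
  hence "inner (v - q) (p - q) - inner (v - p) (p - q) = 0" using assms by auto
  hence "inner (p - q) (p - q) = 0" by (simp add: algebra_simps inner_diff_left inner_diff_right)
  thus ?thesis by simp
qed

lemma orth_proj:
  fixes E :: "'v::real_inner set"
  assumes "fin_dim_subspace E"
  shows "orth_proj E v \<in> E" "\<forall>x\<in>E. inner (v - orth_proj E v) x = 0"
proof -
  have s: "subspace E" using assms fin_dim_subspace_def by blast
  have "\<exists>!p. p \<in> E \<and> (\<forall>x\<in>E. inner (v - p) x = 0)"
    using proj_exists[OF assms, of v] proj_unique[OF s] by blast
  from theI'[OF this] show "orth_proj E v \<in> E" "\<forall>x\<in>E. inner (v - orth_proj E v) x = 0"
    unfolding orth_proj_def by auto
qed

lemma orth_proj_eq:
  fixes E :: "'v::real_inner set"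
  assumes "fin_dim_subspace E" "p \<in> E" "\<forall>x\<in>E. inner (v - p) x = 0"
  shows "orth_proj E v = p"
  using proj_unique[of E] orth_proj[OF assms(1)] assms fin_dim_subspace_def by blast

lemma orth_proj_add:
  assumes "fin_dim_subspace E"
  shows "orth_proj E (a + b) = orth_proj E a + orth_proj E b"
proof (rule orth_proj_eq[OF assms])
  have s: "subspace E" using assms fin_dim_subspace_def by blast
  show "orth_proj E a + orth_proj E b \<in> E" using orth_proj[OF assms] s subspace_add by blast
  show "\<forall>x\<in>E. inner (a + b - (orth_proj E a + orth_proj E b)) x = 0"
    using orth_proj(2)[OF assms, of a] orth_proj(2)[OF assms, of b]
    by (simp add: algebra_simps inner_diff_left inner_add_left)
qed

lemma orth_proj_scale:
  assumes "fin_dim_subspace E"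
  shows "orth_proj E (c *\<^sub>R a) = c *\<^sub>R orth_proj E a"
proof (rule orth_proj_eq[OF assms])
  have s: "subspace E" using assms fin_dim_subspace_def by blast
  show "c *\<^sub>R orth_proj E a \<in> E" using orth_proj[OF assms] s subspace_scale by blast
  show "\<forall>x\<in>E. inner (c *\<^sub>R a - c *\<^sub>R orth_proj E a) x = 0"
    using orth_proj(2)[OF assms, of a]
    by (metis inner_scaleR_left mult_zero_right scaleR_right_diff_distrib)
qed

lemma orth_proj_diff:
  assumes "fin_dim_subspace E"
  shows "orth_proj E (a - b) = orth_proj E a - orth_proj E b"
  using orth_proj_add[OF assms, of "a - b" b] by simp

lemma orth_proj_id:
  assumes "fin_dim_subspace E" "x \<in> E"
  shows "orth_proj E x = x"
  using orth_proj_eq[OF assms(1) assms(2)] by simp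

lemma orth_proj_perp_zero:
  assumes "fin_dim_subspace E" "\<forall>y\<in>E. inner x y = 0"
  shows "orth_proj E x = 0"
  using orth_proj_eq[OF assms(1), of 0 x] assms fin_dim_subspace_def subspace_0 by auto

lemma orth_proj_pyth:
  assumes "fin_dim_subspace E"
  shows "(norm v)^2 = (norm (orth_proj E v))^2 + (norm (v - orth_proj E v))^2"
proof -
  have "inner (v - orth_proj E v) (orth_proj E v) = 0" using orth_proj[OF assms] by blast
  moreover have "v = orth_proj E v + (v - orth_proj E v)" by simp
  ultimately show ?thesis
    by (metis inner_commute norm_add_Pythagorean orthogonal_def)
qed

lemma orth_proj_norm_le:
  assumes "fin_dim_subspace E"
  shows "norm (orth_proj E v) \<le> norm v"
  using orth_proj_pyth[OF assms, of v]
  by (metis abs_norm_cancel le_add_same_cancel1 power2_le_imp_le real_sqrt_abs real_sqrt_le_iff zero_le_power2 norm_ge_zero)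

lemma orth_proj_inner_self:
  assumes "fin_dim_subspace E"
  shows "inner (orth_proj E v) v = (norm (orth_proj E v))^2"
proof -
  have "inner (v - orth_proj E v) (orth_proj E v) = 0" using orth_proj[OF assms] by blast
  thus ?thesis by (simp add: inner_diff_left inner_diff_right inner_commute power2_norm_eq_inner)
qed

lemma orth_proj_closest:
  assumes "fin_dim_subspace E" "t \<in> E"
  shows "(norm (v - t))^2 = (norm (v - orth_proj E v))^2 + (norm (orth_proj E v - t))^2"
proof -
  have s: "subspace E" using assms fin_dim_subspace_def by blast
  have "orth_proj E v - t \<in> E" using orth_proj[OF assms(1)] assms(2) s subspace_diff by blast
  hence "inner (v - orth_proj E v) (orth_proj E v - t) = 0" using orth_proj[OF assms(1)] by blast
  moreover have "v - t = (v - orth_proj E v) + (orth_proj E v - t)" by simp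
  ultimately show ?thesis
    by (metis inner_commute norm_add_Pythagorean orthogonal_def)
qed




lemma infdist_ge_lemma:
  assumes "A \<noteq> {}" "\<And>a. a \<in> A \<Longrightarrow> d \<le> dist x a"
  shows "d \<le> infdist x A"
  using assms by (simp add: infdist_notempty cINF_greatest)

lemma orth_proj_linear:
  assumes "fin_dim_subspace E"
  shows "linear (orth_proj E)"
  by (rule linearI) (simp_all add: orth_proj_add[OF assms] orth_proj_scale[OF assms])

lemma fin_dim_image:
  assumes "fin_dim_subspace E" "fin_dim_subspace A"
  shows "fin_dim_subspace (orth_proj E ` A)"
proof -
  have l: "linear (orth_proj E)" by (rule orth_proj_linear[OF assms(1)])
  obtain B where B: "finite B" "span B = A" using assms(2) fin_dim_subspace_def by blast
  have "subspace (orth_proj E ` A)"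
    using assms(2) l fin_dim_subspace_def linear_subspace_image by blast
  moreover have "span (orth_proj E ` B) = orth_proj E ` A"
    using span_linear_image[OF l, of B] B by simp
  ultimately show ?thesis unfolding fin_dim_subspace_def using B by blast
qed

lemma perp_W:
  assumes "fin_dim_subspace E" "x \<in> E"
  shows "inner (v - orth_proj E v) x = 0" "inner x (v - orth_proj E v) = 0"
  using orth_proj(2)[OF assms(1)] assms(2) inner_commute by metis+

lemma norm_diff_sq:
  fixes X Y :: "'a::real_inner"
  shows "(norm (X - Y))^2 = (norm X)^2 + (norm Y)^2 - 2 * inner X Y"
  by (simp add: power2_norm_eq_inner inner_diff_left inner_diff_right inner_commute)

lemma ar1: "(Y::real) \<le> M2 * A \<Longrightarrow> Y = A + B \<Longrightarrow> B \<le> (M2 - 1) * A"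
  by (simp add: algebra_simps)
lemma ar2: "(T::real) = D + B \<Longrightarrow> B \<le> (M2 - 1) * A \<Longrightarrow> (M2 - 1) * A \<le> (M2 - 1) * D \<Longrightarrow> T \<le> M2 * D"
  by (simp add: algebra_simps)

lemma ar3: "M * (a2::real) \<le> M * c2 \<Longrightarrow> b2 \<le> (M - 1) * a2 \<Longrightarrow> a2 \<le> (M - 1) * s2
   \<Longrightarrow> s2 + b2 + 2 * a2 \<le> M * (c2 + s2)"
  by (simp add: algebra_simps)

locale pb_setup =
  fixes W A :: "'v::real_inner set" and ub :: 'v and \<mu> :: real
  assumes W: "fin_dim_subspace W" and A: "fin_dim_subspace A"
    and mu: "\<forall>a\<in>A. norm a \<le> \<mu> * norm (orth_proj W a)" and mu1: "\<mu> \<ge> 1"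
begin

abbreviation "P \<equiv> orth_proj W"
definition "PA = P ` A"
abbreviation "Q \<equiv> orth_proj PA"

lemma PA: "fin_dim_subspace PA" unfolding PA_def by (rule fin_dim_image[OF W A])
lemma sA: "subspace A" using A fin_dim_subspace_def by blast
lemma sW: "subspace W" using W fin_dim_subspace_def by blast
lemma sPA: "subspace PA" using PA fin_dim_subspace_def by blast

lemma core1:
  assumes "d \<in> W" "y \<in> A" "P y = Q d"
  shows "norm (d + (y - P y)) \<le> \<mu> * norm d"
proof -
  have "inner d (y - P y) = 0" using perp_W[OF W assms(1)] by blast
  hence n1: "(norm (d + (y - P y)))^2 = (norm d)^2 + (norm (y - P y))^2"
    using norm_add_Pythagorean orthogonal_def by blast
  have py: "(norm y)^2 = (norm (P y))^2 + (norm (y - P y))^2" by (rule orth_proj_pyth[OF W])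
  have "norm y \<le> \<mu> * norm (P y)" using mu assms by blast
  hence "(norm y)^2 \<le> (\<mu> * norm (P y))^2" using power_mono[OF _ norm_ge_zero, of _ _ 2] by blast
  hence "(norm y)^2 \<le> \<mu>^2 * (norm (P y))^2" by (simp only: power_mult_distrib)
  hence b: "(norm (y - P y))^2 \<le> (\<mu>^2 - 1) * (norm (P y))^2" using py by (rule ar1)
  have "norm (P y) \<le> norm d" using assms(3) orth_proj_norm_le[OF PA] by simp
  hence "(norm (P y))^2 \<le> (norm d)^2" using power_mono[OF _ norm_ge_zero, of _ _ 2] by blast
  moreover have "\<mu>^2 - 1 \<ge> 0" using mu1 by (simp add: one_le_power)
  ultimately have "(\<mu>^2 - 1) * (norm (P y))^2 \<le> (\<mu>^2 - 1) * (norm d)^2" by (rule mult_left_mono)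
  from n1 b this have "(norm (d + (y - P y)))^2 \<le> \<mu>^2 * (norm d)^2" by (rule ar2)
  hence "(norm (d + (y - P y)))^2 \<le> (\<mu> * norm d)^2" by (simp only: power_mult_distrib)
  thus ?thesis by (rule power2_le_imp_le) (use mu1 in simp)
qed

lemma core2:
  assumes e: "\<forall>a\<in>A. inner e a = 0" and y: "y \<in> A" "P y = Q (P e)"
  shows "norm ((e - y) - P (e - y)) \<le> \<mu> * norm e"
proof -
  define a2 where "a2 = (norm (P y))^2"
  define b2 where "b2 = (norm (y - P y))^2"
  define s2 where "s2 = (norm (e - P e))^2"
  define c2 where "c2 = (norm (P e))^2"
  have py: "(norm y)^2 = a2 + b2" unfolding a2_def b2_def by (rule orth_proj_pyth[OF W])
  have pe: "(norm e)^2 = c2 + s2" unfolding c2_def s2_def by (rule orth_proj_pyth[OF W])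
  have "norm y \<le> \<mu> * norm (P y)" using mu y by blast
  hence "(norm y)^2 \<le> (\<mu> * norm (P y))^2" using power_mono[OF _ norm_ge_zero, of _ _ 2] by blast
  hence "(norm y)^2 \<le> \<mu>^2 * a2" unfolding a2_def by (simp only: power_mult_distrib)
  hence b: "b2 \<le> (\<mu>^2 - 1) * a2" using py by (rule ar1)
  have PeW: "P e \<in> W" "P y \<in> W" using orth_proj[OF W] by auto
  have i2: "inner (P y) (P e) = a2" unfolding a2_def using y(2) orth_proj_inner_self[OF PA, of "P e"] by simp
  have "inner e y = 0" using e y by blast
  moreover have "inner e y = inner (P e) (P y) + inner (e - P e) (y - P y)"
  proof -
    have "inner e y = inner (P e + (e - P e)) (P y + (y - P y))" by simp
    also have "\<dots> = inner (P e) (P y) + inner (P e) (y - P y) + inner (e - P e) (P y) + inner (e - P e) (y - P y)"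
      by (simp only: inner_add_left inner_add_right add.assoc)
    also have "\<dots> = inner (P e) (P y) + inner (e - P e) (y - P y)"
      using perp_W[OF W PeW(1), of y] perp_W[OF W PeW(2), of e] by simp
    finally show ?thesis .
  qed
  moreover have "inner (P e) (P y) = a2" using i2 inner_commute[of "P e" "P y"] by simp
  ultimately have i3: "inner (e - P e) (y - P y) = - a2" by linarith
  have "norm (P y) \<le> norm (P e)" using y(2) orth_proj_norm_le[OF PA] by simp
  hence a4: "a2 \<le> c2" unfolding a2_def c2_def using power_mono[OF _ norm_ge_zero, of _ _ 2] by blast
  have eq: "(e - y) - P (e - y) = (e - P e) - (y - P y)" using orth_proj_diff[OF W] by simp
  have n5: "(norm ((e - y) - P (e - y)))^2 = s2 + b2 + 2 * a2"
    unfolding eq s2_def b2_def using norm_diff_sq[of "e - P e" "y - P y"] i3 by linarith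
  have a0: "a2 \<ge> 0" "s2 \<ge> 0" "b2 \<ge> 0" unfolding a2_def s2_def b2_def by auto
  have "\<bar>inner (e - P e) (y - P y)\<bar> \<le> norm (e - P e) * norm (y - P y)" by (rule Cauchy_Schwarz_ineq2)
  hence "a2 \<le> norm (e - P e) * norm (y - P y)" using i3 by linarith
  hence "a2^2 \<le> (norm (e - P e) * norm (y - P y))^2" using a0(1) power_mono[of a2 _ 2] by blast
  hence c6: "a2^2 \<le> s2 * b2" unfolding s2_def b2_def by (simp only: power_mult_distrib)
  have m0: "\<mu>^2 - 1 \<ge> 0" using mu1 by (simp add: one_le_power)
  have a7: "a2 \<le> (\<mu>^2 - 1) * s2"
  proof (cases "a2 = 0")
    case True thus ?thesis using m0 a0 by simp
  next
    case False
    hence pos: "a2 > 0" using a0 by simp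
    have "s2 * b2 \<le> s2 * ((\<mu>^2 - 1) * a2)" using b a0(2) by (rule mult_left_mono)
    moreover have "s2 * ((\<mu>^2 - 1) * a2) = ((\<mu>^2 - 1) * s2) * a2" by (simp only: mult_ac)
    moreover have "a2^2 = a2 * a2" by (rule power2_eq_square)
    ultimately have "a2 * a2 \<le> ((\<mu>^2 - 1) * s2) * a2" using c6 by linarith
    thus ?thesis using pos by (rule mult_right_le_imp_le)
  qed
  have "s2 + b2 + 2 * a2 \<le> \<mu>^2 * (c2 + s2)"
  proof -
    have "\<mu>^2 * a2 \<le> \<mu>^2 * c2" by (rule mult_left_mono[OF a4]) simp
    thus ?thesis using b a7 by (rule ar3)
  qed
  hence "(norm ((e - y) - P (e - y)))^2 \<le> \<mu>^2 * (norm e)^2" unfolding n5 pe .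
  hence "(norm ((e - y) - P (e - y)))^2 \<le> (\<mu> * norm e)^2" by (simp only: power_mult_distrib)
  thus ?thesis by (rule power2_le_imp_le) (use mu1 in simp)
qed

lemma exists_y: "\<exists>y\<in>A. P y = Q h"
  using orth_proj(1)[OF PA, of h] unfolding PA_def by auto

lemma y_unique: "y \<in> A \<Longrightarrow> y' \<in> A \<Longrightarrow> P y = P y' \<Longrightarrow> y = y'"
proof -
  assume "y \<in> A" "y' \<in> A" "P y = P y'"
  hence "y - y' \<in> A" "P (y - y') = 0" using sA subspace_diff orth_proj_diff[OF W] by auto
  moreover have "norm (y - y') \<le> \<mu> * norm (P (y - y'))" using mu \<open>y - y' \<in> A\<close> by blast
  ultimately show "y = y'" by simp
qed

definition "yf h = (SOME y. y \<in> A \<and> P y = Q h)"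
lemma yf: "yf h \<in> A" "P (yf h) = Q h"
  using someI_ex[OF exists_y[of h, unfolded Bex_def]] unfolding yf_def by auto

definition "cand w = w + (ub + yf (w - P ub)) - P (ub + yf (w - P ub))"

abbreviation "Vk \<equiv> (\<lambda>z. ub + z) ` A"

lemma nearest:
  fixes v :: 'v
  defines "z' \<equiv> ub + orth_proj A (v - ub)"
  shows "z' \<in> Vk" "\<forall>a\<in>A. inner (v - z') a = 0" "norm (v - z') = infdist v Vk"
    "\<And>z. z \<in> Vk \<Longrightarrow> norm (v - z') \<le> norm (v - z)"
proof -
  show "z' \<in> Vk" unfolding z'_def using orth_proj(1)[OF A] by auto
  have vz: "v - z' = (v - ub) - orth_proj A (v - ub)" unfolding z'_def by simp
  show "\<forall>a\<in>A. inner (v - z') a = 0" unfolding vz using orth_proj(2)[OF A, of "v - ub"] .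
  show le: "norm (v - z') \<le> norm (v - z)" if zz: "z \<in> Vk" for z
  proof -
    obtain x where x: "x \<in> A" "z = ub + x" using zz by blast
    have e1: "v - z = (v - ub) - x" using x by simp
    have "(norm (v - z))^2 = (norm (v - z'))^2 + (norm (orth_proj A (v - ub) - x))^2"
      unfolding e1 vz by (rule orth_proj_closest[OF A x(1)])
    hence "(norm (v - z'))^2 \<le> (norm (v - z))^2" by simp
    thus ?thesis using power2_le_imp_le[OF _ norm_ge_zero] by blast
  qed
  have "infdist v Vk \<le> dist v z'" using \<open>z' \<in> Vk\<close> infdist_le by blast
  moreover have "norm (v - z') \<le> infdist v Vk"
    by (rule infdist_ge_lemma) (use \<open>z' \<in> Vk\<close> le in \<open>auto simp: dist_norm\<close>)
  ultimately show "norm (v - z') = infdist v Vk" by (simp add: dist_norm)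
qed

end



context pb_setup begin

lemma P_lin: "P (a + b) = P a + P b" "P (a - b) = P a - P b"
  using orth_proj_add[OF W] orth_proj_diff[OF W] by auto
lemma Q_lin: "Q (a + b) = Q a + Q b" "Q (a - b) = Q a - Q b"
  using orth_proj_add[OF PA] orth_proj_diff[OF PA] by auto

lemma fiber:
  assumes "w \<in> W" "v' \<in> affine_fiber W w"
  shows "P v' = w" "v' - w \<in> orthogonal_comp W"
proof -
  obtain t where t: "t \<in> orthogonal_comp W" "v' = w + t" using assms(2) unfolding affine_fiber_def by blast
  have "\<forall>y\<in>W. inner t y = 0" using t(1) unfolding orthogonal_comp_def orthogonal_def by (simp add: inner_commute)
  hence "P t = 0" by (rule orth_proj_perp_zero[OF W])
  thus "P v' = w" using t(2) P_lin orth_proj_id[OF W assms(1)] by simp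
  show "v' - w \<in> orthogonal_comp W" using t by simp
qed

lemma perp_comp: "x - P x \<in> orthogonal_comp W"
  unfolding orthogonal_comp_def orthogonal_def using perp_W[OF W] by blast

lemma Vk_ne: "Vk \<noteq> {}" using sA subspace_0 by blast

lemma pbdw_eq:
  assumes w: "w \<in> W"
  shows "pbdw W Vk w = cand w"
proof -
  define g where "g = w - P ub"
  define y0 where "y0 = yf g"
  define zs where "zs = ub + y0"
  have y0: "y0 \<in> A" "P y0 = Q g" unfolding y0_def using yf by auto
  have zsV: "zs \<in> Vk" unfolding zs_def using y0 by blast
  have c: "cand w = w + zs - P zs" unfolding cand_def zs_def y0_def g_def by simp
  have Pzs: "w - P zs = g - Q g" unfolding zs_def using y0 P_lin by (simp add: g_def)
  have cF: "cand w \<in> affine_fiber W w"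
    unfolding affine_fiber_def c by (rule image_eqI[of _ _ "zs - P zs"]) (simp_all add: perp_comp)
  have "cand w - zs = w - P zs" unfolding c by simp
  hence ub1: "infdist (cand w) Vk \<le> norm (g - Q g)"
    using infdist_le[OF zsV, of "cand w"] Pzs by (simp add: dist_norm)
  have LB: "norm (g - Q g) \<le> norm (v' - z)" if v': "v' \<in> affine_fiber W w" and z: "z \<in> Vk" for v' z
  proof -
    obtain x where x: "x \<in> A" "z = ub + x" using z by blast
    have "P (v' - z) = g - P x" using fiber(1)[OF w v'] x P_lin unfolding g_def by simp
    moreover have "P x \<in> PA" using x unfolding PA_def by blast
    ultimately have "(norm (P (v' - z)))^2 = (norm (g - Q g))^2 + (norm (Q g - P x))^2"
      using orth_proj_closest[OF PA, of "P x" g] by simp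
    hence "(norm (g - Q g))^2 \<le> (norm (P (v' - z)))^2" by simp
    hence "norm (g - Q g) \<le> norm (P (v' - z))" by (rule power2_le_imp_le[OF _ norm_ge_zero])
    also have "\<dots> \<le> norm (v' - z)" by (rule orth_proj_norm_le[OF W])
    finally show ?thesis .
  qed
  have LB2: "norm (g - Q g) \<le> infdist v' Vk" if "v' \<in> affine_fiber W w" for v'
    by (rule infdist_ge_lemma[OF Vk_ne]) (use LB[OF that] in \<open>simp add: dist_norm\<close>)
  show ?thesis unfolding pbdw_def
  proof (rule the_equality)
    show "cand w \<in> affine_fiber W w \<and> (\<forall>v'\<in>affine_fiber W w. infdist (cand w) Vk \<le> infdist v' Vk)"
      using cF ub1 LB2 by force
  next
    fix c' assume "c' \<in> affine_fiber W w \<and> (\<forall>v'\<in>affine_fiber W w. infdist c' Vk \<le> infdist v' Vk)"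
    hence cF': "c' \<in> affine_fiber W w" and min: "infdist c' Vk \<le> infdist (cand w) Vk" using cF by auto
    define y' where "y' = orth_proj A (c' - ub)"
    define z' where "z' = ub + y'"
    have y'A: "y' \<in> A" unfolding y'_def using orth_proj(1)[OF A] by blast
    have nz: "norm (c' - z') = infdist c' Vk" unfolding z'_def y'_def by (rule nearest(3))
    hence le: "norm (c' - z') \<le> norm (g - Q g)" using min ub1 by simp
    define X where "X = c' - z'"
    have PX: "P X = g - P y'" unfolding X_def z'_def g_def using fiber(1)[OF w cF'] P_lin by simp
    have n1: "(norm X)^2 = (norm (P X))^2 + (norm (X - P X))^2" by (rule orth_proj_pyth[OF W])
    have "P y' \<in> PA" using y'A unfolding PA_def by blast
    hence n2: "(norm (P X))^2 = (norm (g - Q g))^2 + (norm (Q g - P y'))^2"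
      using orth_proj_closest[OF PA, of "P y'" g] PX by simp
    have "(norm X)^2 \<le> (norm (g - Q g))^2" using le unfolding X_def by (rule power_mono[OF _ norm_ge_zero])
    hence z0: "(norm (Q g - P y'))^2 + (norm (X - P X))^2 \<le> 0" using n1 n2 by simp
    have "(norm (Q g - P y'))^2 = 0" "(norm (X - P X))^2 = 0"
      using z0 zero_le_power2[of "norm (Q g - P y')"] zero_le_power2[of "norm (X - P X)"] by linarith+
    hence z1: "norm (Q g - P y') = 0" "norm (X - P X) = 0" by simp_all
    have "y' = y0" using y_unique[OF y'A y0(1)] z1(1) y0(2) by simp
    hence "z' = zs" unfolding z'_def zs_def by simp
    have "X = P X" using z1(2) by simp
    hence "c' - zs = w - P zs" using \<open>z' = zs\<close> PX Pzs unfolding X_def z'_def zs_def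
      using \<open>y' = y0\<close> y0(2) by (simp add: g_def)
    hence "c' = (w - P zs) + zs" by (metis diff_add_cancel)
    moreover have "w + zs - P zs = (w - P zs) + zs" by (simp add: algebra_simps)
    ultimately show "c' = cand w" using c by simp
  qed
qed

lemma cand_fiber:
  assumes "w \<in> W"
  shows "cand w \<in> affine_fiber W w"
proof -
  define zs where "zs = ub + yf (w - P ub)"
  have c: "cand w = w + zs - P zs" unfolding cand_def zs_def by simp
  show ?thesis
    unfolding affine_fiber_def c by (rule image_eqI[of _ _ "zs - P zs"]) (simp_all add: perp_comp)
qed

lemma cand_diff:
  assumes "w \<in> W" "w2 \<in> W"
  shows "norm (cand w - cand w2) \<le> \<mu> * norm (w - w2)"
proof -
  define y where "y = yf (w - P ub) - yf (w2 - P ub)"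
  have yA: "y \<in> A" unfolding y_def using yf sA subspace_diff by blast
  have Py: "P y = Q (w - w2)" unfolding y_def using yf P_lin Q_lin by simp
  have dW: "w - w2 \<in> W" using assms sW subspace_diff by blast
  have "cand w - cand w2 = (w - w2) + (y - P y)" unfolding cand_def y_def using P_lin
    by (simp add: algebra_simps)
  thus ?thesis using core1[OF dW yA Py] by simp
qed

lemma cand_self:
  shows "norm (cand (P v) - v) \<le> \<mu> * infdist v Vk"
proof -
  define x where "x = orth_proj A (v - ub)"
  define e where "e = v - (ub + x)"
  have xA: "x \<in> A" unfolding x_def using orth_proj(1)[OF A] by blast
  have eA: "\<forall>a\<in>A. inner e a = 0" unfolding e_def x_def by (rule nearest(2))
  have ne: "norm e = infdist v Vk" unfolding e_def x_def by (rule nearest(3))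
  define g where "g = P v - P ub"
  define y0 where "y0 = yf g"
  have y0: "y0 \<in> A" "P y0 = Q g" unfolding y0_def using yf by auto
  have "P x \<in> PA" using xA unfolding PA_def by blast
  hence QPx: "Q (P x) = P x" by (rule orth_proj_id[OF PA])
  have "P e = P v - (P ub + P x)" unfolding e_def by (simp only: P_lin)
  hence g: "g = P x + P e" unfolding g_def by (simp add: algebra_simps)
  define y where "y = y0 - x"
  have yA: "y \<in> A" unfolding y_def using y0 xA sA subspace_diff by blast
  have Py: "P y = Q (P e)" unfolding y_def using y0(2) g QPx P_lin Q_lin by simp
  have c1: "cand (P v) = P v + (ub + y0) - (P ub + P y0)" unfolding cand_def y0_def g_def by (simp only: P_lin)
  have veq: "v = ub + x + e" unfolding e_def by simp
  have Pv: "P v = P ub + P x + P e" by (subst veq) (simp only: P_lin)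
  have Pey: "P (e - y) = P e - (P y0 - P x)" unfolding y_def by (simp only: P_lin)
  have "cand (P v) - v = P v + (ub + y0) - (P ub + P y0) - v" using c1 by simp
  also have "\<dots> = (P ub + P x + P e) + (ub + y0) - (P ub + P y0) - (ub + x + e)"
    by (simp only: Pv) (simp add: e_def)
  also have "\<dots> = - ((e - y) - P (e - y))" unfolding Pey by (simp add: y_def algebra_simps)
  finally have "cand (P v) - v = - ((e - y) - P (e - y))" .
  hence "norm (cand (P v) - v) = norm ((e - y) - P (e - y))" by (simp only: norm_minus_cancel)
  also have "\<dots> \<le> \<mu> * norm e" by (rule core2[OF eA yA Py])
  finally show ?thesis using ne by simp
qed

lemma cand_bound:
  assumes "w \<in> W"
  shows "norm (cand w - v) \<le> \<mu> * (infdist v Vk + norm (w - P v))"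
proof -
  have PvW: "P v \<in> W" using orth_proj(1)[OF W] by blast
  have "norm (cand w - v) \<le> norm (cand w - cand (P v)) + norm (cand (P v) - v)"
    using norm_triangle_ineq[of "cand w - cand (P v)" "cand (P v) - v"] by simp
  also have "\<dots> \<le> \<mu> * norm (w - P v) + \<mu> * infdist v Vk"
    using cand_diff[OF assms PvW] cand_self[of v] by simp
  finally show ?thesis by (simp add: algebra_simps)
qed

end



lemma infdist_attained_compact:
  fixes M :: "'a::metric_space set"
  assumes "compact M" "M \<noteq> {}"
  shows "\<exists>m\<in>M. infdist x M = dist x m"
proof -
  have "continuous_on M (dist x)" by (intro continuous_intros)
  then obtain m where m: "m \<in> M" "\<forall>y\<in>M. dist x m \<le> dist x y"
    using continuous_attains_inf[OF assms] by blast
  have "infdist x M \<le> dist x m" using infdist_le[OF m(1)] .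
  moreover have "dist x m \<le> infdist x M" using infdist_ge_lemma[OF assms(2)] m(2) by blast
  ultimately show ?thesis using m(1) by force
qed

lemma delta_ge:
  fixes M W :: "'v::real_inner set"
  assumes M: "compact M" "M \<noteq> {}"
    and ab: "a \<in> fattening M \<sigma>" "b \<in> fattening M \<sigma>" "a - b \<in> orthogonal_comp W"
  shows "norm (a - b) \<le> delta M W \<sigma>"
proof -
  obtain B where B: "\<forall>x\<in>M. norm x \<le> B" using compact_imp_bounded[OF M(1)] bounded_iff by blast
  have nb: "norm x \<le> B + \<sigma>" if "x \<in> fattening M \<sigma>" for x
  proof -
    obtain m where m: "m \<in> M" "infdist x M = dist x m" using infdist_attained_compact[OF M] by blast
    have "dist x m \<le> \<sigma>" using that m(2) unfolding fattening_def by simp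
    hence "norm x \<le> norm m + \<sigma>" using norm_triangle_ineq2[of x m] by (simp add: dist_norm)
    thus ?thesis using B m(1) by force
  qed
  have "bdd_above {norm (u - v) | u v. u \<in> fattening M \<sigma> \<and> v \<in> fattening M \<sigma> \<and> u - v \<in> orthogonal_comp W}"
  proof (rule bdd_aboveI[of _ "2 * (B + \<sigma>)"])
    fix t assume "t \<in> {norm (u - v) | u v. u \<in> fattening M \<sigma> \<and> v \<in> fattening M \<sigma> \<and> u - v \<in> orthogonal_comp W}"
    then obtain u v where uv: "t = norm (u - v)" "u \<in> fattening M \<sigma>" "v \<in> fattening M \<sigma>" by blast
    have "norm (u - v) \<le> norm u + norm v" by (rule norm_triangle_ineq4)
    thus "t \<le> 2 * (B + \<sigma>)" using nb[OF uv(2)] nb[OF uv(3)] uv(1) by simp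
  qed
  thus ?thesis unfolding delta_def using ab by (intro cSup_upper) blast+
qed

lemma mu_bound:
  fixes W E :: "'v::real_inner set"
  assumes W: "fin_dim_subspace W" and E: "fin_dim_subspace E" and le: "mu_const E W \<le> ereal \<mu>"
  shows "\<forall>a\<in>E. norm a \<le> \<mu> * norm (orth_proj W a)"
proof
  fix a assume aE: "a \<in> E"
  have cap: "E \<inter> orthogonal_comp W = {0}"
  proof (rule ccontr)
    assume "E \<inter> orthogonal_comp W \<noteq> {0}"
    hence "mu_const E W = \<infinity>" unfolding mu_const_def by simp
    thus False using le by simp
  qed
  show "norm a \<le> \<mu> * norm (orth_proj W a)"
  proof (cases "a = 0")
    case True
    have "0 \<le> \<mu>"
    proof -
      have "E \<noteq> {0} \<Longrightarrow> 0 \<le> \<mu>"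
      proof -
        assume ne: "E \<noteq> {0}"
        have "0 \<in> E" using E fin_dim_subspace_def subspace_0 by blast
        then obtain b where b: "b \<in> E" "b \<noteq> 0" using ne by blast
        have "mu_const E W = Sup {ereal (norm v / norm (orth_proj W v)) | v. v \<in> E \<and> v \<noteq> 0}"
          unfolding mu_const_def using cap ne by simp
        hence "ereal (norm b / norm (orth_proj W b)) \<le> ereal \<mu>" using le b
          by (metis (mono_tags, lifting) Sup_upper mem_Collect_eq order_trans)
        thus "0 \<le> \<mu>" by (meson ereal_less_eq(3) divide_nonneg_nonneg norm_ge_zero order_trans)
      qed
      moreover have "E = {0} \<Longrightarrow> 0 \<le> \<mu>"
        using le unfolding mu_const_def using cap by (simp add: one_ereal_def)
      ultimately show ?thesis by blast
    qed
    thus ?thesis using True by simp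
  next
    case False
    have ne: "E \<noteq> {0}" using aE False by blast
    have Pa: "orth_proj W a \<noteq> 0"
    proof
      assume "orth_proj W a = 0"
      hence "a \<in> orthogonal_comp W" using perp_W(2)[OF W, of _ a]
        unfolding orthogonal_comp_def orthogonal_def by auto
      thus False using cap aE False by blast
    qed
    have "mu_const E W = Sup {ereal (norm v / norm (orth_proj W v)) | v. v \<in> E \<and> v \<noteq> 0}"
      unfolding mu_const_def using cap ne by simp
    hence "ereal (norm a / norm (orth_proj W a)) \<le> ereal \<mu>" using le aE False
      by (metis (mono_tags, lifting) Sup_upper mem_Collect_eq order_trans)
    hence "norm a / norm (orth_proj W a) \<le> \<mu>" by simp
    thus ?thesis using Pa by (simp add: divide_le_eq mult.commute)
  qed
qed




theorem theorem3p5: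
  fixes Y :: "'y::euclidean_space set"
    and uy :: "'y \<Rightarrow> 'v::{real_inner, complete_space}"
    and W :: "'v set" and m :: nat
    and K :: nat and Mk :: "nat \<Rightarrow> 'v set"
    and ubar :: "nat \<Rightarrow> 'v" and Vbar :: "nat \<Rightarrow> 'v set" and n :: "nat \<Rightarrow> nat"
    and epsk :: "nat \<Rightarrow> real"
    and \<epsilon> \<mu> :: real
    and S :: "'v \<Rightarrow> real" and r R :: real
    and u \<eta> :: 'v and eps_model eps_noise :: real
  assumes Y: "compact Y" "Y \<noteq> {}"
    and uy_cont: "continuous_on Y uy"
    and W: "fin_dim_subspace W" "dim W = m"
    and K: "K \<ge> 1"
    and M_union: "uy ` Y = (\<Union>k\<in>{1..K}. Mk k)"
    and Vbar: "\<And>k. k \<in> {1..K} \<Longrightarrow> fin_dim_subspace (Vbar k) \<and> dim (Vbar k) = n k \<and> n k \<le> m"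
    and epsk: "\<And>k x. k \<in> {1..K} \<Longrightarrow> x \<in> Mk k \<Longrightarrow>
                 infdist x ((\<lambda>z. ubar k + z) ` Vbar k) \<le> epsk k"
    and muk_fin: "\<And>k. k \<in> {1..K} \<Longrightarrow> mu_const (Vbar k) W < \<infinity>"
    and adm: "\<And>k. k \<in> {1..K} \<Longrightarrow> epsk k \<le> \<epsilon> \<and> mu_const (Vbar k) W \<le> ereal \<mu>"
    and eps_pos: "\<epsilon> > 0" and mu_ge: "\<mu> \<ge> 1"
    and surr: "0 < r" "r \<le> R"
      "\<And>v. r * infdist v (uy ` Y) \<le> S v \<and> S v \<le> R * infdist v (uy ` Y)"
    and u_model: "infdist u (uy ` Y) \<le> eps_model"
    and eta: "\<eta> \<in> W" "norm \<eta> \<le> eps_noise"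
  shows "(\<forall>ks\<in>{1..K}.
            (\<forall>j\<in>{1..K}. S (pbdw W ((\<lambda>z. ubar ks + z) ` Vbar ks) (orth_proj W u + \<eta>))
                         \<le> S (pbdw W ((\<lambda>z. ubar j + z) ` Vbar j) (orth_proj W u + \<eta>)))
            \<longrightarrow> norm (u - pbdw W ((\<lambda>z. ubar ks + z) ` Vbar ks) (orth_proj W u + \<eta>))
                  \<le> delta (uy ` Y) W ((R / r) * (\<mu> * (\<epsilon> + eps_noise) + (\<mu> + 1) * eps_model))
                     + eps_noise)
       \<and> (\<forall>ks\<in>{1..K}.
            (\<forall>j\<in>{1..K}. infdist (pbdw W ((\<lambda>z. ubar ks + z) ` Vbar ks) (orth_proj W u + \<eta>)) (uy ` Y)
                         \<le> infdist (pbdw W ((\<lambda>z. ubar j + z) ` Vbar j) (orth_proj W u + \<eta>)) (uy ` Y))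
            \<longrightarrow> norm (u - pbdw W ((\<lambda>z. ubar ks + z) ` Vbar ks) (orth_proj W u + \<eta>))
                  \<le> delta (uy ` Y) W (\<mu> * (\<epsilon> + eps_noise) + (\<mu> + 1) * eps_model)
                     + eps_noise)"
proof -
  define M where "M = uy ` Y"
  have Mc: "compact M" unfolding M_def using compact_continuous_image[OF uy_cont Y(1)] .
  have Mne: "M \<noteq> {}" unfolding M_def using Y(2) by simp
  have sW: "subspace W" using W(1) fin_dim_subspace_def by blast
  define w where "w = orth_proj W u + \<eta>"
  have wW: "w \<in> W" unfolding w_def using orth_proj(1)[OF W(1)] eta(1) sW subspace_add by blast
  have em0: "0 \<le> eps_model" using u_model infdist_nonneg order_trans by blast
  have en0: "0 \<le> eps_noise" using eta(2) norm_ge_zero order_trans by blast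
  obtain vm where vm: "vm \<in> M" "infdist u M = dist u vm" using infdist_attained_compact[OF Mc Mne] by blast
  obtain k0 where k0: "k0 \<in> {1..K}" "vm \<in> Mk k0" using M_union vm(1) unfolding M_def by blast
  have stp: "pb_setup W (Vbar k) \<mu>" if "k \<in> {1..K}" for k
  proof -
    have A: "fin_dim_subspace (Vbar k)" using Vbar[OF that] by blast
    have "mu_const (Vbar k) W \<le> ereal \<mu>" using adm[OF that] by blast
    note mb = mu_bound[OF W(1) A this]
    show ?thesis unfolding pb_setup_def
      by (intro conjI) (rule W(1), rule A, rule mb, rule mu_ge)
  qed
  define c where "c k = pbdw W ((\<lambda>z. ubar k + z) ` Vbar k) w" for k
  have cF: "c k - w \<in> orthogonal_comp W" if k: "k \<in> {1..K}" for k
  proof -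
    interpret pb_setup W "Vbar k" "ubar k" \<mu> by (rule stp[OF k])
    show ?thesis unfolding c_def pbdw_eq[OF wW] using fiber(2)[OF wW cand_fiber[OF wW]] .
  qed
  have mu0: "0 \<le> \<mu>" using mu_ge by simp
  have c0: "infdist (c k0) M \<le> \<mu> * (\<epsilon> + (eps_model + eps_noise))"
  proof -
    interpret pb_setup W "Vbar k0" "ubar k0" \<mu> by (rule stp[OF k0(1)])
    have "infdist (c k0) M \<le> dist (c k0) vm" by (rule infdist_le[OF vm(1)])
    also have "\<dots> = norm (cand w - vm)" unfolding c_def pbdw_eq[OF wW] by (simp add: dist_norm)
    also have "\<dots> \<le> \<mu> * (infdist vm Vk + norm (w - P vm))" by (rule cand_bound[OF wW])
    also have "\<dots> \<le> \<mu> * (\<epsilon> + (eps_model + eps_noise))"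
    proof (rule mult_left_mono[OF _ mu0], rule add_mono)
      show "infdist vm Vk \<le> \<epsilon>" using order_trans[OF epsk[OF k0] conjunct1[OF adm[OF k0(1)]]] .
      have "w - P vm = P (u - vm) + \<eta>" unfolding w_def by (simp add: P_lin)
      hence "norm (w - P vm) \<le> norm (P (u - vm)) + norm \<eta>" by (simp add: norm_triangle_ineq)
      also have "\<dots> \<le> norm (u - vm) + norm \<eta>" using orth_proj_norm_le[OF W(1)] by simp
      also have "\<dots> \<le> eps_model + eps_noise" using vm(2) u_model eta(2) unfolding M_def
        by (simp add: dist_norm)
      finally show "norm (w - P vm) \<le> eps_model + eps_noise" .
    qed
    finally show ?thesis .
  qed
  define \<rho> where "\<rho> = \<mu> * (\<epsilon> + eps_noise) + (\<mu> + 1) * eps_model"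
  have c0': "infdist (c k0) M \<le> \<rho>"
    using c0 em0 unfolding \<rho>_def by (simp add: algebra_simps)
  have rge: "eps_model + eps_noise \<le> \<rho>"
  proof -
    have "1 * (\<epsilon> + eps_noise) \<le> \<mu> * (\<epsilon> + eps_noise)"
      by (rule mult_right_mono[OF mu_ge]) (use eps_pos en0 in simp)
    hence "eps_noise \<le> \<mu> * (\<epsilon> + eps_noise)" using eps_pos by simp
    moreover have "eps_model \<le> (\<mu> + 1) * eps_model" using mu_ge em0 by (simp add: algebra_simps)
    ultimately show ?thesis unfolding \<rho>_def by simp
  qed
  have final: "norm (u - c ks) \<le> delta M W \<sigma> + eps_noise"
    if ks: "ks \<in> {1..K}" and d: "infdist (c ks) M \<le> \<sigma>" and s: "eps_model + eps_noise \<le> \<sigma>" for ks \<sigma>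
  proof -
    have "infdist (u + \<eta>) M \<le> infdist u M + dist (u + \<eta>) u" by (rule infdist_triangle)
    also have "\<dots> \<le> eps_model + eps_noise" using u_model eta(2) unfolding M_def by (simp add: dist_norm)
    finally have a: "u + \<eta> \<in> fattening M \<sigma>" unfolding fattening_def using s by simp
    have b: "c ks \<in> fattening M \<sigma>" unfolding fattening_def using d by simp
    have "u - orth_proj W u \<in> orthogonal_comp W"
      unfolding orthogonal_comp_def orthogonal_def using perp_W(2)[OF W(1)] by blast
    hence "(u - orth_proj W u) - (c ks - w) \<in> orthogonal_comp W"
      using cF[OF ks] subspace_orthogonal_comp subspace_diff by blast
    moreover have "(u - orth_proj W u) - (c ks - w) = (u + \<eta>) - c ks" unfolding w_def by simp
    ultimately have ab: "norm ((u + \<eta>) - c ks) \<le> delta M W \<sigma>"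
      using delta_ge[OF Mc Mne a b] by simp
    have "norm (u - c ks) \<le> norm ((u + \<eta>) - c ks) + norm \<eta>"
      using norm_triangle_ineq4[of "(u + \<eta>) - c ks" \<eta>] by simp
    thus ?thesis using ab eta(2) by simp
  qed
  have rho0: "0 \<le> \<rho>" using rge em0 en0 by simp
  have p1: "\<forall>ks\<in>{1..K}. (\<forall>j\<in>{1..K}. S (c ks) \<le> S (c j)) \<longrightarrow>
      norm (u - c ks) \<le> delta M W ((R / r) * \<rho>) + eps_noise"
  proof (intro ballI impI)
    fix ks assume ks: "ks \<in> {1..K}" and sm: "\<forall>j\<in>{1..K}. S (c ks) \<le> S (c j)"
    have "r * infdist (c ks) M \<le> S (c ks)" using surr(3) unfolding M_def by blast
    also have "\<dots> \<le> S (c k0)" using sm k0(1) by blast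
    also have "\<dots> \<le> R * infdist (c k0) M" using surr(3) unfolding M_def by blast
    also have "\<dots> \<le> R * \<rho>" using c0' surr by (simp add: mult_left_mono)
    finally have "r * infdist (c ks) M \<le> R * \<rho>" .
    hence d: "infdist (c ks) M \<le> (R / r) * \<rho>" using surr(1) by (simp add: field_simps)
    have "1 \<le> R / r" using surr by simp
    hence "\<rho> \<le> (R / r) * \<rho>" using rho0 by (metis mult_1 mult_right_mono)
    thus "norm (u - c ks) \<le> delta M W ((R / r) * \<rho>) + eps_noise"
      using final[OF ks d] rge by simp
  qed
  have p2: "\<forall>ks\<in>{1..K}. (\<forall>j\<in>{1..K}. infdist (c ks) M \<le> infdist (c j) M) \<longrightarrow>
      norm (u - c ks) \<le> delta M W \<rho> + eps_noise"
  proof (intro ballI impI)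
    fix ks assume ks: "ks \<in> {1..K}" and sm: "\<forall>j\<in>{1..K}. infdist (c ks) M \<le> infdist (c j) M"
    have "infdist (c ks) M \<le> \<rho>" using sm k0(1) c0' by force
    thus "norm (u - c ks) \<le> delta M W \<rho> + eps_noise" using final[OF ks _ rge] by simp
  qed
  show ?thesis using p1 p2 unfolding c_def w_def M_def \<rho>_def by simp
qed



end
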